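(* Let $z_1,z_2,z_3\in\mathbb{C}$ be such that $0<|z_1|\le |z_2|\le |z_3|$. Then \[ |z_1+z_2+z_3| + \left(3-\left|\frac{z_1}{|z_1|}+\frac{z_2}{|z_2|}+\frac{z_3}{|z_3|}\right|\right)|z_1| \le |z_1|+|z_2|+|z_3|. \] *)

theory Defs
  imports Complex_Main
begin

end

theory Submission
  imports Defs
begin

theorem mainTheorem2:
  fixes z1 z2 z3 :: complex
  assumes "0 < cmod z1" and "cmod z1 \<le> cmod z2" and "cmod z2 \<le> cmod z3"
  shows "cmod (z1 + z2 + z3)
           + (3 - cmod (z1 / of_real (cmod z1) + z2 / of_real (cmod z2) + z3 / of_real (cmod z3))) * cmod z1
         \<le> cmod z1 + cmod z2 + cmod z3"
proof -
  define r1 where "r1 = cmod z1"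
  define r2 where "r2 = cmod z2"
  define r3 where "r3 = cmod z3"
  define u1 where "u1 = z1 / of_real r1"
  define u2 where "u2 = z2 / of_real r2"
  define u3 where "u3 = z3 / of_real r3"
  have p1: "r1 > 0" using assms r1_def by simp
  have p2: "r2 > 0" using assms r1_def r2_def by linarith
  have p3: "r3 > 0" using assms r2_def r3_def by linarith
  have e1: "z1 = of_real r1 * u1" using p1 unfolding u1_def by simp
  have e2: "z2 = of_real r2 * u2" using p2 unfolding u2_def by simp
  have e3: "z3 = of_real r3 * u3" using p3 unfolding u3_def by simp
  have n2: "cmod u2 = 1" using p2 unfolding u2_def r2_def by (simp add: norm_divide)
  have n3: "cmod u3 = 1" using p3 unfolding u3_def r3_def by (simp add: norm_divide)
  have id: "z1 + z2 + z3 = of_real r1 * (u1 + u2 + u3) + of_real (r2 - r1) * (u2 + u3) + of_real (r3 - r2) * u3"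
    unfolding e1 e2 e3 by (simp add: algebra_simps)
  have "cmod (z1 + z2 + z3) \<le> cmod (of_real r1 * (u1 + u2 + u3)) + cmod (of_real (r2 - r1) * (u2 + u3)) + cmod (of_real (r3 - r2) * u3)"
    unfolding id by (meson norm_triangle_le order_refl add_mono)
  also have "\<dots> = r1 * cmod (u1 + u2 + u3) + (r2 - r1) * cmod (u2 + u3) + (r3 - r2)"
    using p1 assms(2,3) r1_def r2_def r3_def n3 by (simp add: norm_mult del: of_real_diff)
  also have "\<dots> \<le> r1 * cmod (u1 + u2 + u3) + (r2 - r1) * 2 + (r3 - r2)"
  proof -
    have "cmod (u2 + u3) \<le> 2" using norm_triangle_ineq[of u2 u3] n2 n3 by simp
    moreover have "r2 - r1 \<ge> 0" using assms(2) r1_def r2_def by simp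
    ultimately have "(r2 - r1) * cmod (u2 + u3) \<le> (r2 - r1) * 2" using mult_left_mono by blast
    then show ?thesis by linarith
  qed
  finally have "cmod (z1 + z2 + z3) \<le> r1 * cmod (u1 + u2 + u3) + (r2 - r1) * 2 + (r3 - r2)" .
  then show ?thesis unfolding r1_def[symmetric] r2_def[symmetric] r3_def[symmetric]
    u1_def[symmetric] u2_def[symmetric] u3_def[symmetric] by (simp add: algebra_simps)
qed

end
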